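(* Let $\mathbf{v}_1,\ldots,\mathbf{v}_k$ be orthogonal unit vectors in $\mathbb{R}^k$, let $F:\mathbb{R}^{kn}\to\mathbb{R}$ be \[ F(\mathbf{w}_1,\ldots,\mathbf{w}_n)=\mathbb{E}_{\mathbf{x}\sim\mathcal{N}(\mathbf{0},I_k)}\left[\frac{1}{2}\left(\sum_{i=1}^{n}[\mathbf{w}_i^\top\mathbf{x}]_+-\sum_{i=1}^{k}[\mathbf{v}_i^\top\mathbf{x}]_+\right)^2\right], \] and let $\mathbf{w}=(\mathbf{w}_1,\ldots,\mathbf{w}_n)\in\mathbb{R}^{kn}$ and $\alpha>0$ be such that $F$ is thrice differentiable on an open set containing the closed ball of radius $\alpha$ centered at $\mathbf{w}$. For a unit vector $\mathbf{u}\in\mathbb{R}^{kn}$ and $t\in(0,\alpha]$ let $R_{\mathbf{w},\mathbf{u},t}$ be the number with $F(\mathbf{w}+t\mathbf{u})=F(\mathbf{w})+t\nabla F(\mathbf{w})^\top\mathbf{u}+\tfrac{1}{2}t^2\mathbf{u}^\top\nabla^2F(\mathbf{w})\mathbf{u}+\tfrac{1}{6}t^3R_{\mathbf{w},\mathbf{u},t}$. Assume that for some $\epsilon,B>0$, $\|\nabla F(\mathbf{w})\|\le\epsilon$ and $\sup_{t\in(0,\alpha],\|\mathbf{u}\|=1}|R_{\mathbf{w},\mathbf{u},t}|\le B$; that the smallest eigenvalue $\lambda_{\min}$ of $\nabla^2F(\mathbf{w})$ is positive; that $9\lambda_{\min}^2-25B\epsilon\ge0$; and that $r:=\frac{3\lambda_{\min}-\sqrt{9\lambda_{\min}^2-25B\epsilon}}{2B}$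 satisfies $r<\alpha$ and $r<\min_i\|\mathbf{w}_i\|$. If moreover \[ F(\mathbf{w})>r^2\left(\frac{1}{2}+n(n-1)\left(\frac{\max_i\|\mathbf{w}_i\|+r}{2\pi(\min_i\|\mathbf{w}_i\|-r)}+\frac{1}{2}\right)+\frac{nk\max_i\|\mathbf{v}_i\|}{2\pi(\min_i\|\mathbf{w}_i\|-r)}\right)+r\epsilon, \] then $F$ has a local minimum $\mathbf{w}^*$ with $\|\mathbf{w}^*-\mathbf{w}\|\le r$ which is not a global minimum (i.e. $F(\mathbf{w}^* )>\inf F=0$).
   Context: $[z]_+=\max\{0,z\}$. A local minimum of $F$ is a point $\mathbf{w}^*$ with $F(\mathbf{w}^* )\le F(\mathbf{w}')$ for all $\mathbf{w}'$ in some open neighborhood of $\mathbf{w}^*$. Norms are Euclidean. *)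

theory Defs
  imports "HOL-Analysis.Analysis" "HOL-Probability.Probability"
begin

definition relu :: "real \<Rightarrow> real" where
  "relu z = max 0 z"

definition gauss_exp :: "(real^'k \<Rightarrow> real) \<Rightarrow> real" where
  "gauss_exp f = (\<integral>x. (\<Prod>j\<in>UNIV. std_normal_density (x$j)) * f x \<partial>lborel)"

definition Floss :: "real^'k^'k \<Rightarrow> real^'k^'n \<Rightarrow> real" where
  "Floss v w = gauss_exp (\<lambda>x. (1/2) *
      ((\<Sum>i\<in>UNIV. relu (w$i \<bullet> x)) - (\<Sum>i\<in>UNIV. relu (v$i \<bullet> x)))\<^sup>2)"

definition grad_of :: "('a::euclidean_space \<Rightarrow>\<^sub>L real) \<Rightarrow> 'a" where
  "grad_of D = (\<Sum>b\<in>Basis. D b *\<^sub>R b)"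

definition hess_op :: "('a::euclidean_space \<Rightarrow>\<^sub>L 'a \<Rightarrow>\<^sub>L real) \<Rightarrow> 'a \<Rightarrow> 'a" where
  "hess_op H u = (\<Sum>b\<in>Basis. H u b *\<^sub>R b)"

definition min_eig :: "('a::euclidean_space \<Rightarrow>\<^sub>L 'a \<Rightarrow>\<^sub>L real) \<Rightarrow> real" where
  "min_eig H = Min {c. \<exists>u. u \<noteq> 0 \<and> hess_op H u = c *\<^sub>R u}"

definition taylor_R :: "('a::real_normed_vector \<Rightarrow> real) \<Rightarrow> ('a \<Rightarrow>\<^sub>L real) \<Rightarrow>
    ('a \<Rightarrow>\<^sub>L 'a \<Rightarrow>\<^sub>L real) \<Rightarrow> 'a \<Rightarrow> 'a \<Rightarrow> real \<Rightarrow> real" where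
  "taylor_R F D1 D2 w u t =
     6 / t^3 * (F (w + t *\<^sub>R u) - F w - t * D1 u - t\<^sup>2 / 2 * D2 u u)"

definition local_min :: "('a::topological_space \<Rightarrow> real) \<Rightarrow> 'a \<Rightarrow> bool" where
  "local_min F x \<longleftrightarrow> (\<exists>S. open S \<and> x \<in> S \<and> (\<forall>y\<in>S. F x \<le> F y))"

end

theory Submission
  imports Defs
begin

lemma line_deriv:
  fixes f :: "'a::real_normed_vector \<Rightarrow> real"
  assumes "(f has_derivative D) (at (a + s *\<^sub>R d))"
  shows "((\<lambda>t. f (a + t *\<^sub>R d)) has_real_derivative D d) (at s)"
proof -
  have l: "((\<lambda>t. a + t *\<^sub>R d) has_derivative (\<lambda>t. t *\<^sub>R d)) (at s)"
    by (auto intro!: derivative_eq_intros)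
  have lin: "linear D" using assms has_derivative_linear by blast
  have "((\<lambda>t. f (a + t *\<^sub>R d)) has_derivative (\<lambda>t. D (t *\<^sub>R d))) (at s)"
    by (rule has_derivative_compose[OF l assms])
  then show ?thesis
    unfolding has_field_derivative_def by (rule has_derivative_eq_rhs) (rule ext, simp add: linear_scale[OF lin])
qed

lemma apply_deriv:
  fixes f1 :: "'a::real_normed_vector \<Rightarrow> ('a \<Rightarrow>\<^sub>L real)"
  assumes "(f1 has_derivative blinfun_apply D) (at z)"
  shows "((\<lambda>z. f1 z x) has_derivative (\<lambda>h. D h x)) (at z)"
  using assms by (auto intro!: derivative_eq_intros)

lemma sym_aux:
  fixes f :: "'a::real_normed_vector \<Rightarrow> real" and f1 :: "'a \<Rightarrow> ('a \<Rightarrow>\<^sub>L real)"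
    and f2 :: "'a \<Rightarrow> ('a \<Rightarrow>\<^sub>L 'a \<Rightarrow>\<^sub>L real)"
  assumes d1: "\<And>z. z \<in> ball w \<rho> \<Longrightarrow> (f has_derivative blinfun_apply (f1 z)) (at z)"
    and d2: "\<And>z. z \<in> ball w \<rho> \<Longrightarrow> (f1 has_derivative blinfun_apply (f2 z)) (at z)"
    and h: "h > 0" "h * (norm x + norm y) < \<rho>"
  shows "\<exists>z. dist z w \<le> h * (norm x + norm y) \<and>
     f (w + h *\<^sub>R x + h *\<^sub>R y) - f (w + h *\<^sub>R x) - f (w + h *\<^sub>R y) + f w = h\<^sup>2 * f2 z y x"
proof -
  have dist_le: "dist (w + s *\<^sub>R x + t *\<^sub>R y) w \<le> h * (norm x + norm y)"
    if "0 \<le> s" "s \<le> h" "0 \<le> t" "t \<le> h" for s t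
  proof -
    have "norm (s *\<^sub>R x + t *\<^sub>R y) \<le> s * norm x + t * norm y"
      using norm_triangle_ineq[of "s *\<^sub>R x" "t *\<^sub>R y"] that by simp
    also have "\<dots> \<le> h * norm x + h * norm y"
      using that by (intro add_mono mult_right_mono) auto
    finally show ?thesis by (simp add: dist_norm algebra_simps)
  qed
  have inb: "w + s *\<^sub>R x + t *\<^sub>R y \<in> ball w \<rho>" if "0 \<le> s" "s \<le> h" "0 \<le> t" "t \<le> h" for s t
    using dist_le[OF that] h by (simp add: dist_commute)
  define g where "g s = f (w + s *\<^sub>R x + h *\<^sub>R y) - f (w + s *\<^sub>R x)" for s
  have dg: "DERIV g s :> (f1 (w + s *\<^sub>R x + h *\<^sub>R y) x - f1 (w + s *\<^sub>R x) x)" if "0 \<le> s" "s \<le> h" for s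
  proof -
    have a: "((\<lambda>t. f ((w + h *\<^sub>R y) + t *\<^sub>R x)) has_real_derivative f1 (w + s *\<^sub>R x + h *\<^sub>R y) x) (at s)"
    proof -
      have "(f has_derivative blinfun_apply (f1 (w + s *\<^sub>R x + h *\<^sub>R y))) (at ((w + h *\<^sub>R y) + s *\<^sub>R x))"
        using d1[OF inb[of s h]] that h by (simp add: add_ac)
      from line_deriv[OF this] show ?thesis .
    qed
    have b: "((\<lambda>t. f (w + t *\<^sub>R x)) has_real_derivative f1 (w + s *\<^sub>R x) x) (at s)"
    proof -
      have "(f has_derivative blinfun_apply (f1 (w + s *\<^sub>R x))) (at (w + s *\<^sub>R x))"
        using d1[OF inb[of s 0]] that h by simp
      from line_deriv[OF this] show ?thesis .
    qed
    show ?thesis unfolding g_def using DERIV_diff[OF a b] by (simp add: add_ac)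
  qed
  then obtain \<xi> where xi: "0 < \<xi>" "\<xi> < h"
    "g h - g 0 = (h - 0) * (f1 (w + \<xi> *\<^sub>R x + h *\<^sub>R y) x - f1 (w + \<xi> *\<^sub>R x) x)"
    using MVT2[OF h(1), of g "\<lambda>s. f1 (w + s *\<^sub>R x + h *\<^sub>R y) x - f1 (w + s *\<^sub>R x) x", OF dg] by blast
  define k where "k t = f1 (w + \<xi> *\<^sub>R x + t *\<^sub>R y) x" for t
  have dk: "DERIV k t :> f2 (w + \<xi> *\<^sub>R x + t *\<^sub>R y) y x" if "0 \<le> t" "t \<le> h" for t
  proof -
    have "((\<lambda>z. f1 z x) has_derivative (\<lambda>d. f2 (w + \<xi> *\<^sub>R x + t *\<^sub>R y) d x)) (at (w + \<xi> *\<^sub>R x + t *\<^sub>R y))"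
      by (rule apply_deriv, rule d2, rule inb) (use xi that in auto)
    from line_deriv[OF this] show ?thesis unfolding k_def .
  qed
  then obtain \<eta> where eta: "0 < \<eta>" "\<eta> < h"
    "k h - k 0 = (h - 0) * f2 (w + \<xi> *\<^sub>R x + \<eta> *\<^sub>R y) y x"
    using MVT2[OF h(1), of k "\<lambda>t. f2 (w + \<xi> *\<^sub>R x + t *\<^sub>R y) y x", OF dk] by blast
  show ?thesis
  proof (intro exI conjI)
    show "dist (w + \<xi> *\<^sub>R x + \<eta> *\<^sub>R y) w \<le> h * (norm x + norm y)"
      using dist_le xi eta by auto
    show "f (w + h *\<^sub>R x + h *\<^sub>R y) - f (w + h *\<^sub>R x) - f (w + h *\<^sub>R y) + f w = h\<^sup>2 * f2 (w + \<xi> *\<^sub>R x + \<eta> *\<^sub>R y) y x"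
    proof -
      have e1: "k h - k 0 = f1 (w + \<xi> *\<^sub>R x + h *\<^sub>R y) x - f1 (w + \<xi> *\<^sub>R x) x"
        unfolding k_def by simp
      have e2: "g h - g 0 = f (w + h *\<^sub>R x + h *\<^sub>R y) - f (w + h *\<^sub>R x) - f (w + h *\<^sub>R y) + f w"
        unfolding g_def by simp
      show ?thesis using xi(3) eta(3) e1 e2 by (simp add: power2_eq_square)
    qed
  qed
qed

lemma bil_bound:
  fixes L :: "'a::real_normed_vector \<Rightarrow>\<^sub>L 'a \<Rightarrow>\<^sub>L real"
  shows "\<bar>L a b\<bar> \<le> norm L * norm a * norm b"
proof -
  have "\<bar>L a b\<bar> \<le> norm (L a) * norm b" using norm_blinfun[of "L a" b] by simp
  also have "\<dots> \<le> norm L * norm a * norm b"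
    by (intro mult_right_mono norm_blinfun) auto
  finally show ?thesis .
qed

lemma hess_sym:
  fixes f :: "'a::real_normed_vector \<Rightarrow> real" and f1 :: "'a \<Rightarrow> ('a \<Rightarrow>\<^sub>L real)"
    and f2 :: "'a \<Rightarrow> ('a \<Rightarrow>\<^sub>L 'a \<Rightarrow>\<^sub>L real)"
  assumes U: "open U" "w \<in> U"
    and d1: "\<And>z. z \<in> U \<Longrightarrow> (f has_derivative blinfun_apply (f1 z)) (at z)"
    and d2: "\<And>z. z \<in> U \<Longrightarrow> (f1 has_derivative blinfun_apply (f2 z)) (at z)"
    and c: "isCont f2 w"
  shows "f2 w x y = f2 w y x"
proof (rule ccontr)
  assume ne: "f2 w x y \<noteq> f2 w y x"
  define d where "d = \<bar>f2 w x y - f2 w y x\<bar>"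
  have dpos: "d > 0" using ne by (simp add: d_def)
  have pos: "2 * norm x * norm y + 1 > 0"
    by (metis add_nonneg_pos mult_nonneg_nonneg norm_ge_zero zero_le_numeral zero_less_one)
  define e where "e = d / (2 * (2 * norm x * norm y + 1))"
  have epos: "e > 0" using dpos unfolding e_def by (intro divide_pos_pos mult_pos_pos) (use pos in auto)
  obtain \<rho> where rho: "\<rho> > 0" "ball w \<rho> \<subseteq> U" using U openE by blast
  obtain \<delta> where delta: "\<delta> > 0" "\<And>z. dist z w < \<delta> \<Longrightarrow> dist (f2 z) (f2 w) < e"
    using c epos unfolding continuous_at_eps_delta by blast
  define h where "h = min \<rho> \<delta> / (2 * (norm x + norm y + 1))"
  have pos2: "norm x + norm y + 1 > 0" using norm_ge_zero[of x] norm_ge_zero[of y] by linarith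
  have hpos: "h > 0" using rho delta pos2 unfolding h_def by (intro divide_pos_pos mult_pos_pos) auto
  have hlt: "h * (norm x + norm y) < min \<rho> \<delta>"
  proof -
    have "h * (norm x + norm y) \<le> h * (norm x + norm y + 1)" using hpos by simp
    also have "\<dots> = min \<rho> \<delta> / 2" unfolding h_def using pos2 by (simp add: field_simps)
    also have "\<dots> < min \<rho> \<delta>" using rho(1) delta(1) by (simp add: min_def)
    finally show ?thesis .
  qed
  have d1': "\<And>z. z \<in> ball w \<rho> \<Longrightarrow> (f has_derivative blinfun_apply (f1 z)) (at z)"
    and d2': "\<And>z. z \<in> ball w \<rho> \<Longrightarrow> (f1 has_derivative blinfun_apply (f2 z)) (at z)"
    using d1 d2 rho by auto
  obtain z1 where z1: "dist z1 w \<le> h * (norm x + norm y)"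
    "f (w + h *\<^sub>R x + h *\<^sub>R y) - f (w + h *\<^sub>R x) - f (w + h *\<^sub>R y) + f w = h\<^sup>2 * f2 z1 y x"
    using sym_aux[where x=x and y=y, OF d1' d2' hpos] hlt by auto
  obtain z2 where z2: "dist z2 w \<le> h * (norm y + norm x)"
    "f (w + h *\<^sub>R y + h *\<^sub>R x) - f (w + h *\<^sub>R y) - f (w + h *\<^sub>R x) + f w = h\<^sup>2 * f2 z2 x y"
    using sym_aux[where x=y and y=x, OF d1' d2' hpos] hlt by (auto simp: add.commute)
  have "h\<^sup>2 * f2 z1 y x = h\<^sup>2 * f2 z2 x y"
    using z1(2) z2(2) by (simp add: algebra_simps)
  then have eq: "f2 z1 y x = f2 z2 x y" using hpos by simp
  have n1: "norm (f2 z1 - f2 w) < e" using delta(2)[of z1] z1(1) hlt by (simp add: dist_norm)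
  have n2: "norm (f2 z2 - f2 w) < e" using delta(2)[of z2] z2(1) hlt by (simp add: dist_norm add.commute)
  have b1: "\<bar>f2 z1 y x - f2 w y x\<bar> \<le> e * norm x * norm y"
  proof -
    have "\<bar>f2 z1 y x - f2 w y x\<bar> = \<bar>(f2 z1 - f2 w) y x\<bar>" by (simp add: blinfun.diff_left)
    also have "\<dots> \<le> norm (f2 z1 - f2 w) * norm y * norm x" by (rule bil_bound)
    also have "\<dots> \<le> e * norm y * norm x" using n1 by (intro mult_right_mono) auto
    finally show ?thesis by (simp add: ac_simps)
  qed
  have b2: "\<bar>f2 z2 x y - f2 w x y\<bar> \<le> e * norm x * norm y"
  proof -
    have "\<bar>f2 z2 x y - f2 w x y\<bar> = \<bar>(f2 z2 - f2 w) x y\<bar>" by (simp add: blinfun.diff_left)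
    also have "\<dots> \<le> norm (f2 z2 - f2 w) * norm x * norm y" by (rule bil_bound)
    also have "\<dots> \<le> e * norm x * norm y" using n2 by (intro mult_right_mono) auto
    finally show ?thesis .
  qed
  have "d \<le> 2 * e * norm x * norm y" unfolding d_def using b1 b2 eq by linarith
  also have "\<dots> < d"
  proof -
    have "2 * e * norm x * norm y = d * (norm x * norm y) / (2 * norm x * norm y + 1)"
      unfolding e_def using pos by (simp add: field_simps)
    also have "\<dots> < d" using dpos pos by (simp add: field_simps add_pos_nonneg)
    finally show ?thesis .
  qed
  finally show False by simp
qed

lemma hess_inner:
  fixes H :: "'a::euclidean_space \<Rightarrow>\<^sub>L 'a \<Rightarrow>\<^sub>L real"
  shows "hess_op H u \<bullet> y = H u y"
proof -
  have "hess_op H u \<bullet> y = (\<Sum>b\<in>Basis. H u b * (b \<bullet> y))"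
    unfolding hess_op_def by (simp add: inner_sum_left)
  also have "\<dots> = H u (\<Sum>b\<in>Basis. (y \<bullet> b) *\<^sub>R b)"
    by (simp add: blinfun.sum_right blinfun.scaleR_right inner_commute mult.commute)
  also have "\<dots> = H u y" by (simp add: euclidean_representation)
  finally show ?thesis .
qed

lemma eig_orth:
  fixes H :: "'a::euclidean_space \<Rightarrow>\<^sub>L 'a \<Rightarrow>\<^sub>L real"
  assumes sym: "\<And>x y. H x y = H y x"
    and a: "hess_op H u = c *\<^sub>R u" and b: "hess_op H v = d *\<^sub>R v" and cd: "c \<noteq> d"
  shows "u \<bullet> v = 0"
proof -
  have "c * (u \<bullet> v) = H u v" using hess_inner[of H u v] a by simp
  also have "\<dots> = H v u" by (rule sym)
  also have "\<dots> = d * (u \<bullet> v)" using hess_inner[of H v u] b by (simp add: inner_commute)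
  finally have "(c - d) * (u \<bullet> v) = 0" by (simp add: algebra_simps)
  then show ?thesis using cd by simp
qed

lemma eig_finite:
  fixes H :: "'a::euclidean_space \<Rightarrow>\<^sub>L 'a \<Rightarrow>\<^sub>L real"
  assumes sym: "\<And>x y. H x y = H y x"
  shows "finite {c. \<exists>u. u \<noteq> 0 \<and> hess_op H u = c *\<^sub>R u}" (is "finite ?S")
proof -
  define e where "e c = (SOME u. u \<noteq> 0 \<and> hess_op H u = c *\<^sub>R u)" for c
  have e: "e c \<noteq> 0 \<and> hess_op H (e c) = c *\<^sub>R e c" if "c \<in> ?S" for c
  proof -
    have "\<exists>u. u \<noteq> 0 \<and> hess_op H u = c *\<^sub>R u" using that by simp
    from someI_ex[OF this] show ?thesis unfolding e_def .
  qed
  have orth: "e c \<bullet> e d = 0" if "c \<in> ?S" "d \<in> ?S" "c \<noteq> d" for c d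
    using eig_orth[OF sym, of "e c" c "e d" d] e[OF that(1)] e[OF that(2)] that(3) by blast
  have inj: "inj_on e ?S"
  proof (rule inj_onI)
    fix c d assume cd: "c \<in> ?S" "d \<in> ?S" "e c = e d"
    show "c = d"
    proof (rule ccontr)
      assume "c \<noteq> d"
      then have "e c \<bullet> e c = 0" using orth[OF cd(1,2)] cd(3) by simp
      then show False using e[OF cd(1)] by simp
    qed
  qed
  have "pairwise orthogonal (e ` ?S)"
    unfolding pairwise_def orthogonal_def by (auto intro!: orth)
  moreover have "0 \<notin> e ` ?S"
  proof
    assume "0 \<in> e ` ?S"
    then obtain c where c: "0 = e c" "c \<in> ?S" by (rule imageE)
    with e[OF c(2)] show False by simp
  qed
  ultimately have "independent (e ` ?S)" by (rule pairwise_orthogonal_independent)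
  then have "finite (e ` ?S)" by (rule finiteI_independent)
  then show ?thesis using inj by (rule finite_imageD)
qed

lemma quad_zero:
  fixes a b :: real
  assumes b0: "b \<ge> 0" and q: "\<And>t. t * a + t\<^sup>2 * b \<ge> 0"
  shows "a = 0"
proof -
  define t where "t = - a / (b + 1)"
  have hb: "b + 1 > 0" using b0 by simp
  have tb: "t * (b + 1) = - a" unfolding t_def using hb by simp
  have "(b + 1)\<^sup>2 * (t * a + t\<^sup>2 * b) = (b + 1) * (t * (b + 1)) * a + (t * (b + 1))\<^sup>2 * b"
    by (simp add: power2_eq_square algebra_simps)
  also have "\<dots> = (b + 1) * (- a\<^sup>2) + a\<^sup>2 * b" unfolding tb by (simp add: power2_eq_square)
  also have "\<dots> = - a\<^sup>2" by (simp add: algebra_simps)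
  finally have eq: "(b + 1)\<^sup>2 * (t * a + t\<^sup>2 * b) = - a\<^sup>2" .
  have "0 \<le> (b + 1)\<^sup>2 * (t * a + t\<^sup>2 * b)" using q[of t] by simp
  then have "a\<^sup>2 \<le> 0" using eq by simp
  then show ?thesis by simp
qed

lemma quad_ge_min_eig:
  fixes H :: "'a::euclidean_space \<Rightarrow>\<^sub>L 'a \<Rightarrow>\<^sub>L real"
  assumes sym: "\<And>x y. H x y = H y x" and u: "norm u = 1"
  shows "min_eig H \<le> H u u"
proof -
  have "continuous_on (sphere 0 1) (\<lambda>u. H u u)"
    by (intro continuous_intros)
  moreover have "sphere (0::'a) 1 \<noteq> {}" using u by auto
  ultimately obtain u0 where u0: "u0 \<in> sphere 0 1" "\<And>y. y \<in> sphere 0 1 \<Longrightarrow> H u0 u0 \<le> H y y"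
    using continuous_attains_inf[OF compact_sphere] by blast
  define c where "c = H u0 u0"
  have u0n: "norm u0 = 1" using u0(1) by simp
  have ge: "c * (norm x)\<^sup>2 \<le> H x x" for x
  proof (cases "x = 0")
    case True then show ?thesis by simp
  next
    case False
    define y where "y = (1 / norm x) *\<^sub>R x"
    have "y \<in> sphere 0 1" using False by (simp add: y_def)
    then have "c \<le> H y y" using u0(2) by (simp add: c_def)
    also have "H y y = H x x / (norm x)\<^sup>2"
      by (simp add: y_def blinfun.scaleR_left blinfun.scaleR_right power2_eq_square)
    finally show ?thesis using False by (simp add: field_simps)
  qed
  have lin: "H u0 y = c * (u0 \<bullet> y)" for y
  proof -
    define a where "a = 2 * (H u0 y - c * (u0 \<bullet> y))"
    define b where "b = H y y - c * (norm y)\<^sup>2"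
    have b0: "b \<ge> 0" using ge[of y] by (simp add: b_def)
    have quad: "t * a + t\<^sup>2 * b \<ge> 0" for t
    proof -
      have "0 \<le> H (u0 + t *\<^sub>R y) (u0 + t *\<^sub>R y) - c * (norm (u0 + t *\<^sub>R y))\<^sup>2"
        using ge[of "u0 + t *\<^sub>R y"] by simp
      also have "\<dots> = t * a + t\<^sup>2 * b"
      proof -
        have uu: "u0 \<bullet> u0 = 1" using u0n by (simp add: norm_eq_sqrt_inner)
        have n: "(norm (u0 + t *\<^sub>R y))\<^sup>2 = 1 + 2 * t * (u0 \<bullet> y) + t\<^sup>2 * (norm y)\<^sup>2"
          unfolding power2_norm_eq_inner using uu
          by (simp add: inner_add_left inner_add_right inner_commute algebra_simps power2_eq_square)
        have hq: "H (u0 + t *\<^sub>R y) (u0 + t *\<^sub>R y) = H u0 u0 + 2 * t * H u0 y + t\<^sup>2 * H y y"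
          using sym[of y u0]
          by (simp add: blinfun.add_left blinfun.add_right blinfun.scaleR_left blinfun.scaleR_right
              algebra_simps power2_eq_square)
        show ?thesis unfolding n hq a_def b_def c_def by (simp add: algebra_simps)
      qed
      finally show ?thesis .
    qed
    have "a = 0" by (rule quad_zero[OF b0 quad])
    then show ?thesis by (simp add: a_def)
  qed
  have "hess_op H u0 = c *\<^sub>R u0"
  proof (rule euclidean_eqI)
    fix b :: 'a assume "b \<in> Basis"
    show "hess_op H u0 \<bullet> b = (c *\<^sub>R u0) \<bullet> b" using hess_inner[of H u0 b] lin[of b] by simp
  qed
  moreover have "u0 \<noteq> 0" using u0n by auto
  ultimately have "c \<in> {c. \<exists>u. u \<noteq> 0 \<and> hess_op H u = c *\<^sub>R u}" by blast
  then have "min_eig H \<le> c" unfolding min_eig_def by (rule Min_le[OF eig_finite[OF sym]])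
  also have "c \<le> H u u" using u0(2)[of u] u by (simp add: c_def)
  finally show ?thesis .
qed

lemma grad_inner:
  fixes D :: "'a::euclidean_space \<Rightarrow>\<^sub>L real"
  shows "grad_of D \<bullet> u = D u"
proof -
  have "grad_of D \<bullet> u = (\<Sum>b\<in>Basis. D b * (b \<bullet> u))"
    unfolding grad_of_def by (simp add: inner_sum_left)
  also have "\<dots> = D (\<Sum>b\<in>Basis. (u \<bullet> b) *\<^sub>R b)"
    by (simp add: blinfun.sum_right blinfun.scaleR_right inner_commute mult.commute)
  also have "\<dots> = D u" by (simp add: euclidean_representation)
  finally show ?thesis .
qed

theorem lemma2:
  fixes v :: "real^'k^'k" and w :: "real^'k^'n"
    and \<alpha> \<epsilon> B :: real and U :: "(real^'k^'n) set"
    and F1 :: "real^'k^'n \<Rightarrow> ((real^'k^'n) \<Rightarrow>\<^sub>L real)"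
    and F2 :: "real^'k^'n \<Rightarrow> ((real^'k^'n) \<Rightarrow>\<^sub>L (real^'k^'n) \<Rightarrow>\<^sub>L real)"
    and F3 :: "real^'k^'n \<Rightarrow> ((real^'k^'n) \<Rightarrow>\<^sub>L (real^'k^'n) \<Rightarrow>\<^sub>L (real^'k^'n) \<Rightarrow>\<^sub>L real)"
  assumes v_unit: "\<And>i. norm (v$i) = 1"
    and v_orth: "\<And>i j. i \<noteq> j \<Longrightarrow> v$i \<bullet> v$j = 0"
    and alpha_pos: "\<alpha> > 0"
    and U_open: "open U" and U_ball: "cball w \<alpha> \<subseteq> U"
    and D1: "\<And>x. x \<in> U \<Longrightarrow> (Floss v has_derivative blinfun_apply (F1 x)) (at x)"
    and D2: "\<And>x. x \<in> U \<Longrightarrow> (F1 has_derivative blinfun_apply (F2 x)) (at x)"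
    and D3: "\<And>x. x \<in> U \<Longrightarrow> (F2 has_derivative blinfun_apply (F3 x)) (at x)"
    and eps_pos: "\<epsilon> > 0" and B_pos: "B > 0"
    and grad_small: "norm (grad_of (F1 w)) \<le> \<epsilon>"
    and R_bound: "\<And>t u. t \<in> {0<..\<alpha>} \<Longrightarrow> norm u = 1 \<Longrightarrow>
                    \<bar>taylor_R (Floss v) (F1 w) (F2 w) w u t\<bar> \<le> B"
    and lam_pos: "min_eig (F2 w) > 0"
    and disc: "9 * (min_eig (F2 w))\<^sup>2 - 25 * B * \<epsilon> \<ge> 0"
    and r_lt_alpha: "(3 * min_eig (F2 w) - sqrt (9 * (min_eig (F2 w))\<^sup>2 - 25 * B * \<epsilon>)) / (2 * B) < \<alpha>"
    and r_lt_min: "(3 * min_eig (F2 w) - sqrt (9 * (min_eig (F2 w))\<^sup>2 - 25 * B * \<epsilon>)) / (2 * B)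
                     < Min (range (\<lambda>i. norm (w$i)))"
    and F_large: "let r = (3 * min_eig (F2 w) - sqrt (9 * (min_eig (F2 w))\<^sup>2 - 25 * B * \<epsilon>)) / (2 * B);
                      n = real CARD('n); k = real CARD('k);
                      wmax = Max (range (\<lambda>i. norm (w$i)));
                      wmin = Min (range (\<lambda>i. norm (w$i)));
                      vmax = Max (range (\<lambda>i. norm (v$i)))
                  in Floss v w > r\<^sup>2 * (1/2 + n * (n - 1) * ((wmax + r) / (2 * pi * (wmin - r)) + 1/2)
                                         + n * k * vmax / (2 * pi * (wmin - r))) + r * \<epsilon>"
  shows "\<exists>w'. local_min (Floss v) w' \<and>
           dist w' w \<le> (3 * min_eig (F2 w) - sqrt (9 * (min_eig (F2 w))\<^sup>2 - 25 * B * \<epsilon>)) / (2 * B) \<and>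
           Floss v w' > 0"
proof -
  define F where "F = (Floss v :: real^'k^'n \<Rightarrow> real)"
  define lm where "lm = min_eig (F2 w)"
  define s where "s = sqrt (9 * lm\<^sup>2 - 25 * B * \<epsilon>)"
  define r where "r = (3 * lm - s) / (2 * B)"
  have wU: "w \<in> U" using U_ball alpha_pos by auto
  have cont2: "isCont F2 w" using D3[OF wU] by (rule has_derivative_continuous)
  have sym: "\<And>x y. F2 w x y = F2 w y x"
    by (rule hess_sym[OF U_open wU D1 D2 cont2])
  have quad: "lm \<le> F2 w u u" if "norm u = 1" for u
    unfolding lm_def by (rule quad_ge_min_eig[OF sym that])
  have grad: "\<bar>F1 w u\<bar> \<le> \<epsilon>" if "norm u = 1" for u
  proof -
    have "\<bar>F1 w u\<bar> = \<bar>grad_of (F1 w) \<bullet> u\<bar>" by (simp add: grad_inner)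
    also have "\<dots> \<le> norm (grad_of (F1 w)) * norm u" by (rule Cauchy_Schwarz_ineq2)
    also have "\<dots> \<le> \<epsilon>" using grad_small that by simp
    finally show ?thesis .
  qed
  have lam: "lm > 0" using lam_pos by (simp add: lm_def)
  have D0: "9 * lm\<^sup>2 - 25 * B * \<epsilon> \<ge> 0" unfolding lm_def using disc by linarith
  have s0: "s \<ge> 0" unfolding s_def by (rule real_sqrt_ge_zero[OF D0])
  have ss: "s\<^sup>2 = 9 * lm\<^sup>2 - 25 * B * \<epsilon>" unfolding s_def using D0 real_sqrt_pow2 by blast
  have Be: "B * \<epsilon> > 0" using B_pos eps_pos by simp
  have "(3 * lm)\<^sup>2 = 9 * lm\<^sup>2" by (simp add: power_mult_distrib)
  then have "s\<^sup>2 < (3 * lm)\<^sup>2" unfolding ss using Be by linarith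
  then have s3: "s < 3 * lm" by (rule power2_less_imp_less) (use lam in simp)
  have rpos: "r > 0" unfolding r_def using s3 B_pos by simp
  have rB: "r * B < 3 * lm" unfolding r_def using s0 B_pos lam by simp
  have key: "B * r\<^sup>2 - 3 * lm * r = - 25 * \<epsilon> / 4"
  proof -
    have "B * r\<^sup>2 - 3 * lm * r = ((3 * lm - s)\<^sup>2 - 2 * 3 * lm * (3 * lm - s)) / (4 * B)"
      unfolding r_def using B_pos by (simp add: field_simps power2_eq_square)
    also have "\<dots> = (s\<^sup>2 - 9 * lm\<^sup>2) / (4 * B)" by (simp add: power2_eq_square algebra_simps)
    also have "\<dots> = - 25 * \<epsilon> / 4" unfolding ss using B_pos by (simp add: field_simps)
    finally show ?thesis .
  qed
  have r_alpha: "r < \<alpha>" using r_lt_alpha by (simp add: r_def s_def lm_def)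
  have taylor: "F (w + t *\<^sub>R u) \<ge> F w - t * \<epsilon> + t\<^sup>2 * (lm / 2 - t * B / 6)"
    if t: "0 < t" "t \<le> r" and u: "norm u = 1" for t u
  proof -
    define X where "X = F (w + t *\<^sub>R u) - F w - t * F1 w u - t\<^sup>2 / 2 * F2 w u u"
    have "\<bar>6 / t ^ 3 * X\<bar> \<le> B"
      using R_bound[of t u] t u r_alpha unfolding X_def taylor_R_def F_def by simp
    then have "- B \<le> 6 / t ^ 3 * X" by (simp only: abs_le_iff) linarith
    moreover have t3: "t ^ 3 > 0" using t by simp
    ultimately have "- B * (t ^ 3 / 6) \<le> (6 / t ^ 3 * X) * (t ^ 3 / 6)"
      by (intro mult_right_mono) auto
    also have "\<dots> = X" using t3 by simp
    finally have "- B * t ^ 3 / 6 \<le> X" by simp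
    moreover have "- t * \<epsilon> \<le> t * F1 w u"
    proof -
      have "- \<epsilon> \<le> F1 w u" using grad[OF u] by (simp only: abs_le_iff) linarith
      then have "t * (- \<epsilon>) \<le> t * F1 w u" using t by (intro mult_left_mono) auto
      then show ?thesis by simp
    qed
    moreover have "t\<^sup>2 / 2 * lm \<le> t\<^sup>2 / 2 * F2 w u u" using quad[OF u] by (simp add: mult_left_mono)
    ultimately have "F (w + t *\<^sub>R u) \<ge> F w - t * \<epsilon> + t\<^sup>2 / 2 * lm - B * t ^ 3 / 6"
      unfolding X_def by linarith
    then show ?thesis by (simp add: power2_eq_square power3_eq_cube algebra_simps)
  qed
  have lowb: "F z \<ge> F w - r * \<epsilon>" if "z \<in> cball w r" for z
  proof (cases "z = w")
    case True then show ?thesis using rpos eps_pos by simp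
  next
    case False
    define t where "t = dist z w"
    define u where "u = (1 / t) *\<^sub>R (z - w)"
    have t0: "t > 0" "t \<le> r" using False that by (auto simp: t_def dist_commute)
    have u1: "norm u = 1" using t0 by (simp add: u_def t_def dist_norm)
    have zeq: "z = w + t *\<^sub>R u" using t0 by (simp add: u_def)
    have "t\<^sup>2 * (lm / 2 - t * B / 6) \<ge> 0"
    proof -
      have "t * B \<le> r * B" using t0 B_pos by simp
      then have "lm / 2 - t * B / 6 \<ge> 0" using rB lam by linarith
      then show ?thesis by simp
    qed
    then have "F z \<ge> F w - t * \<epsilon>" using taylor[OF t0 u1] zeq by simp
    moreover have "t * \<epsilon> \<le> r * \<epsilon>" using t0 eps_pos by simp
    ultimately show ?thesis by simp
  qed
  have sph: "F z > F w" if "dist z w = r" for z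
  proof -
    define u where "u = (1 / r) *\<^sub>R (z - w)"
    have u1: "norm u = 1" using rpos that by (simp add: u_def dist_norm)
    have zeq: "z = w + r *\<^sub>R u" using rpos by (simp add: u_def)
    have "r\<^sup>2 * (lm / 2 - r * B / 6) = - (B * r\<^sup>2 - 3 * lm * r) * r / 6"
      by (simp add: power2_eq_square algebra_simps)
    also have "\<dots> = 25 * \<epsilon> * r / 24" unfolding key by simp
    finally have e25: "r\<^sup>2 * (lm / 2 - r * B / 6) = 25 * \<epsilon> * r / 24" .
    have "F z \<ge> F w - r * \<epsilon> + r\<^sup>2 * (lm / 2 - r * B / 6)" using taylor[OF rpos order_refl u1] zeq by simp
    then have "F z \<ge> F w - r * \<epsilon> + 25 * \<epsilon> * r / 24" unfolding e25 .
    moreover have "r * \<epsilon> > 0" using rpos eps_pos by simp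
    moreover have "25 * \<epsilon> * r / 24 = 25 / 24 * (r * \<epsilon>)" by simp
    ultimately show ?thesis by linarith
  qed
  have Fw: "F w > r * \<epsilon>"
  proof -
    define n where "n = real CARD('n)"
    define k where "k = real CARD('k)"
    define wmax where "wmax = Max (range (\<lambda>i. norm (w$i)))"
    define wmin where "wmin = Min (range (\<lambda>i. norm (w$i)))"
    define vmax where "vmax = Max (range (\<lambda>i. norm (v$i)))"
    have FL: "Floss v w > r\<^sup>2 * (1/2 + n * (n - 1) * ((wmax + r) / (2 * pi * (wmin - r)) + 1/2)
                                         + n * k * vmax / (2 * pi * (wmin - r))) + r * \<epsilon>"
      using F_large unfolding Let_def r_def s_def lm_def wmax_def wmin_def vmax_def n_def k_def .
    have rw: "r < wmin" using r_lt_min unfolding r_def s_def lm_def wmin_def .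
    have wmax0: "wmax \<ge> 0"
    proof -
      have "norm (w $ undefined) \<le> wmax" unfolding wmax_def by (rule Max_ge) auto
      then show ?thesis using norm_ge_zero[of "w $ undefined"] by linarith
    qed
    have vmax0: "vmax \<ge> 0"
    proof -
      have "norm (v $ undefined) \<le> vmax" unfolding vmax_def by (rule Max_ge) auto
      then show ?thesis using norm_ge_zero[of "v $ undefined"] by linarith
    qed
    have n1: "n \<ge> 1" unfolding n_def using finite_UNIV_card_ge_0[where 'a='n] by simp
    have k1: "k \<ge> 1" unfolding k_def using finite_UNIV_card_ge_0[where 'a='k] by simp
    have den: "2 * pi * (wmin - r) > 0" using rw pi_gt_zero by simp
    have a1: "(wmax + r) / (2 * pi * (wmin - r)) \<ge> 0"
      using wmax0 rpos den by (intro divide_nonneg_pos) auto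
    have a2: "n * (n - 1) \<ge> 0" using n1 by simp
    have a3: "n * k * vmax / (2 * pi * (wmin - r)) \<ge> 0"
      using n1 k1 vmax0 den by (intro divide_nonneg_pos mult_nonneg_nonneg) auto
    have "1/2 + n * (n - 1) * ((wmax + r) / (2 * pi * (wmin - r)) + 1/2)
                                         + n * k * vmax / (2 * pi * (wmin - r)) \<ge> 0"
      using a1 a2 a3 n1 by (intro add_nonneg_nonneg mult_nonneg_nonneg) auto
    then have "r\<^sup>2 * (1/2 + n * (n - 1) * ((wmax + r) / (2 * pi * (wmin - r)) + 1/2)
                                         + n * k * vmax / (2 * pi * (wmin - r))) \<ge> 0" by simp
    then show ?thesis using FL unfolding F_def by linarith
  qed
  have contF: "continuous_on (cball w r) F"
  proof (rule continuous_at_imp_continuous_on, intro ballI)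
    fix z assume "z \<in> cball w r"
    then have "z \<in> U" using U_ball r_alpha by auto
    then show "isCont F z" unfolding F_def using D1 by (blast intro: has_derivative_continuous)
  qed
  obtain ws where ws: "ws \<in> cball w r" "\<And>y. y \<in> cball w r \<Longrightarrow> F ws \<le> F y"
    using continuous_attains_inf[OF compact_cball _ contF] rpos by fastforce
  have "F ws \<le> F w" using ws(2)[of w] rpos by simp
  then have "dist ws w \<noteq> r" using sph by fastforce
  then have inb: "dist w ws < r" using ws(1) by (simp add: dist_commute)
  show ?thesis
  proof (intro exI conjI)
    show "local_min (Floss v) ws" unfolding local_min_def
      using inb ws(2) by (intro exI[of _ "ball w r"]) (auto simp: F_def)
    show "dist ws w \<le> (3 * min_eig (F2 w) - sqrt (9 * (min_eig (F2 w))\<^sup>2 - 25 * B * \<epsilon>)) / (2 * B)"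
      using inb by (simp add: r_def s_def lm_def dist_commute)
    show "Floss v ws > 0" using lowb[OF ws(1)] Fw unfolding F_def by simp
  qed
qed

end
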